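(* Fix a scenario $s\in S$. Let $\Pi_s\subseteq\mathbb{R}^{n+1}$ be any neighborhood of the origin and let $\Pi_s^*=\Pi_s\cap(\mathbb{R}^n\times\mathbb{R}_+)$. Define $$\bar P_s:=\Big\{(x,\theta_s)\in\mathbb{R}^n\times\mathbb{R}:\ \lambda^Tx+\theta_s\ge \overline{Q}_s^*(\lambda,1)\ \text{ and }\ \lambda^Tx\ge \phi_s(\lambda)\ \text{ for all }\lambda\in\mathbb{R}^n\Big\}.$$ Then $P_s(\Pi_s^* )=\bar P_s$.
   Context: Two-stage stochastic integer program with finite scenario set $S$ and probabilities $p_s>0$, $\sum_{s\in S}p_s=1$. Data: $c\in\mathbb{R}^n$, matrix $A$ and vector $b$, and for each $s\in S$ matrices $T^s,W^s$ and vectors $h^s,q^s$ (all data rational). $X=\{x\in\mathbb{R}^n: x_j\in\mathbb{Z},\ j\in J_X\}$ and $Y=\{y\in\mathbb{R}^{n_y}: y_j\in\mathbb{Z},\ j\in J_Y\}$ for given index sets $J_X,J_Y$. For each $s$, $K^s:=\{(x,y)\in X\times Y: Ax\ge b,\ T^sx+W^sy\ge h^s\}$, assumed nonempty and bounded. Define $\overline{Q}_s^*:\mathbb{R}^n\times\mathbb{R}_+\to\mathbb{R}$ by $\overline{Q}_s^*(\pi,\pi_0)=\min\{\pi^Tx+\pi_0(q^s)^Ty:(x,y)\in K^s\}$. For $\Pi\subseteq\mathbb{R}^n\times\mathbb{R}_+$, $P_s(\Pi):=\{(x,\theta_s)\in\mathbb{R}^n\times\mathbb{R}:\ \pi^Tx+\pi_0\theta_s\ge\overline{Q}_s^*(\pi,\pi_0)\text{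 for all }(\pi,\pi_0)\in\Pi\}$. For $\lambda\in\mathbb{R}^n$, $\phi_s(\lambda):=\inf\{\mathbb{1}^Tv+\mathbb{1}^Tu+\lambda^Tx:\ Ax+u\ge b,\ T^sx+W^sy+v\ge h^s,\ x\in X,\ y\in Y,\ u\ge0,\ v\ge 0\}\in\mathbb{R}\cup\{-\infty\}$ (the inequality $\lambda^Tx\ge\phi_s(\lambda)$ is the Lagrangian feasibility cut; $\lambda^Tx+\theta_s\ge\overline{Q}_s^*(\lambda,1)$ is the Lagrangian optimality cut). *)

theory Defs
  imports "HOL-Analysis.Analysis"
begin

text \<open>Data of one fixed scenario s: first-stage x :: real^'n, second-stage y :: real^'ny,
  first-stage constraints A x \<ge> b (rows indexed by 'm1), scenario constraints
  T x + W y \<ge> h (rows indexed by 'm2), second-stage cost q.\<close>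

definition vge :: "real^'m \<Rightarrow> real^'m \<Rightarrow> bool" where
  "vge u w \<longleftrightarrow> (\<forall>i. u $ i \<ge> w $ i)"

definition mixed_int :: "'n set \<Rightarrow> (real^'n) set" where
  "mixed_int J = {x. \<forall>j\<in>J. x $ j \<in> \<int>}"

definition Kset :: "'nx set \<Rightarrow> 'ny set \<Rightarrow> real^'nx^'m1 \<Rightarrow> real^'m1
    \<Rightarrow> real^'nx^'m2 \<Rightarrow> real^'ny^'m2 \<Rightarrow> real^'m2 \<Rightarrow> ((real^'nx) \<times> (real^'ny)) set" where
  "Kset JX JY A b T W h =
     {(x, y). x \<in> mixed_int JX \<and> y \<in> mixed_int JY \<and> vge (A *v x) b
              \<and> vge (T *v x + W *v y) h}"

text \<open>\<open>Qbar\<close> = \<open>min{\<pi>\<^sup>T x + \<pi>\<^sub>0 q\<^sup>T y : (x,y) \<in> K}\<close> (the minimum is attained for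
  bounded nonempty mixed-integer sets with rational data; we write it as an infimum).\<close>
definition Qbar :: "'nx set \<Rightarrow> 'ny set \<Rightarrow> real^'nx^'m1 \<Rightarrow> real^'m1
    \<Rightarrow> real^'nx^'m2 \<Rightarrow> real^'ny^'m2 \<Rightarrow> real^'m2 \<Rightarrow> real^'ny
    \<Rightarrow> real^'nx \<Rightarrow> real \<Rightarrow> real" where
  "Qbar JX JY A b T W h q \<pi> \<pi>0 =
     Inf ((\<lambda>(x, y). \<pi> \<bullet> x + \<pi>0 * (q \<bullet> y)) ` Kset JX JY A b T W h)"

definition phi :: "'nx set \<Rightarrow> 'ny set \<Rightarrow> real^'nx^'m1 \<Rightarrow> real^'m1
    \<Rightarrow> real^'nx^'m2 \<Rightarrow> real^'ny^'m2 \<Rightarrow> real^'m2 \<Rightarrow> real^'nx \<Rightarrow> ereal" where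
  "phi JX JY A b T W h lam =
     Inf {ereal (sum (\<lambda>i. v $ i) UNIV + sum (\<lambda>i. u $ i) UNIV + lam \<bullet> x) | x y u v.
            x \<in> mixed_int JX \<and> y \<in> mixed_int JY \<and> vge u 0 \<and> vge v 0
            \<and> vge (A *v x + u) b \<and> vge (T *v x + W *v y + v) h}"

definition Pset :: "'nx set \<Rightarrow> 'ny set \<Rightarrow> real^'nx^'m1 \<Rightarrow> real^'m1
    \<Rightarrow> real^'nx^'m2 \<Rightarrow> real^'ny^'m2 \<Rightarrow> real^'m2 \<Rightarrow> real^'ny
    \<Rightarrow> ((real^'nx) \<times> real) set \<Rightarrow> ((real^'nx) \<times> real) set" where
  "Pset JX JY A b T W h q PP =
     {(x, \<theta>). \<forall>(\<pi>, \<pi>0)\<in>PP. \<pi> \<bullet> x + \<pi>0 * \<theta> \<ge> Qbar JX JY A b T W h q \<pi> \<pi>0}"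

definition Pbar :: "'nx set \<Rightarrow> 'ny set \<Rightarrow> real^'nx^'m1 \<Rightarrow> real^'m1
    \<Rightarrow> real^'nx^'m2 \<Rightarrow> real^'ny^'m2 \<Rightarrow> real^'m2 \<Rightarrow> real^'ny
    \<Rightarrow> ((real^'nx) \<times> real) set" where
  "Pbar JX JY A b T W h q =
     {(x, \<theta>). \<forall>lam. lam \<bullet> x + \<theta> \<ge> Qbar JX JY A b T W h q lam 1
                 \<and> ereal (lam \<bullet> x) \<ge> phi JX JY A b T W h lam}"

end

theory Submission
  imports Defs
begin

lemma Inf_scale:
  fixes g :: "'a \<Rightarrow> real"
  assumes "K \<noteq> {}" "bdd_below (g ` K)" "c > 0"
  shows "Inf ((\<lambda>k. c * g k) ` K) = c * Inf (g ` K)"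
proof (rule antisym)
  have bd: "bdd_below ((\<lambda>k. c * g k) ` K)"
  proof -
    obtain m where "\<forall>k\<in>K. m \<le> g k" using assms(2) by (auto simp: bdd_below_def)
    then have "\<forall>k\<in>K. c*m \<le> c * g k" using assms(3) by simp
    then show ?thesis by (auto simp: bdd_below_def)
  qed
  have "Inf ((\<lambda>k. c * g k) ` K) / c \<le> Inf (g ` K)"
  proof (rule cInf_greatest)
    show "g ` K \<noteq> {}" using assms by simp
    fix z assume "z \<in> g ` K"
    then obtain k where k: "k \<in> K" "z = g k" by auto
    have "Inf ((\<lambda>k. c * g k) ` K) \<le> c * g k" using bd k by (intro cInf_lower) auto
    then show "Inf ((\<lambda>k. c * g k) ` K) / c \<le> z" using assms(3) k by (simp add: divide_le_eq mult.commute)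
  qed
  then show "Inf ((\<lambda>k. c * g k) ` K) \<le> c * Inf (g ` K)" using assms(3) by (simp add: divide_le_eq mult.commute)
  show "c * Inf (g ` K) \<le> Inf ((\<lambda>k. c * g k) ` K)"
  proof (rule cInf_greatest)
    show "(\<lambda>k. c * g k) ` K \<noteq> {}" using assms by simp
    fix z assume "z \<in> (\<lambda>k. c * g k) ` K"
    then obtain k where k: "k \<in> K" "z = c * g k" by auto
    have "Inf (g ` K) \<le> g k" using assms(2) k by (intro cInf_lower) auto
    then show "c * Inf (g ` K) \<le> z" using assms(3) k by simp
  qed
qed

lemma Inf_add_ge:
  fixes f g :: "'a \<Rightarrow> real"
  assumes "K \<noteq> {}" "bdd_below (f ` K)" "bdd_below (g ` K)"
  shows "Inf (f ` K) + Inf (g ` K) \<le> Inf ((\<lambda>k. f k + g k) ` K)"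
proof (rule cInf_greatest)
  show "(\<lambda>k. f k + g k) ` K \<noteq> {}" using assms by simp
  fix z assume "z \<in> (\<lambda>k. f k + g k) ` K"
  then obtain k where k: "k \<in> K" "z = f k + g k" by auto
  have "Inf (f ` K) \<le> f k" "Inf (g ` K) \<le> g k" using assms k by (auto intro: cInf_lower)
  then show "Inf (f ` K) + Inf (g ` K) \<le> z" using k by simp
qed

lemma bdd_lin:
  fixes K :: "((real^'a) \<times> (real^'b)) set"
  assumes "bounded K"
  shows "bdd_below ((\<lambda>(x, y). \<pi> \<bullet> x + \<pi>0 * (q \<bullet> y)) ` K)"
proof -
  obtain B where B: "\<forall>z\<in>K. norm z \<le> B" using assms by (auto simp: bounded_iff)
  have "\<forall>z\<in>K. - (norm \<pi> * B + \<bar>\<pi>0\<bar> * (norm q * B)) \<le> (\<lambda>(x, y). \<pi> \<bullet> x + \<pi>0 * (q \<bullet> y)) z"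
  proof
    fix z assume z: "z \<in> K"
    obtain x y where xy: "z = (x, y)" by (cases z)
    have nx: "norm x \<le> B" using B z xy norm_fst_le[of x y] by force
    have ny: "norm y \<le> B" using B z xy norm_snd_le[of y x] by force
    have "\<bar>\<pi> \<bullet> x\<bar> \<le> norm \<pi> * norm x" by (rule Cauchy_Schwarz_ineq2)
    also have "\<dots> \<le> norm \<pi> * B" using nx by (simp add: mult_left_mono)
    finally have 1: "\<bar>\<pi> \<bullet> x\<bar> \<le> norm \<pi> * B" .
    have "\<bar>q \<bullet> y\<bar> \<le> norm q * norm y" by (rule Cauchy_Schwarz_ineq2)
    also have "\<dots> \<le> norm q * B" using ny by (simp add: mult_left_mono)
    finally have 2: "\<bar>q \<bullet> y\<bar> \<le> norm q * B" .
    have "\<bar>\<pi>0 * (q \<bullet> y)\<bar> \<le> \<bar>\<pi>0\<bar> * (norm q * B)"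
      using 2 by (simp add: abs_mult mult_left_mono)
    then show "- (norm \<pi> * B + \<bar>\<pi>0\<bar> * (norm q * B)) \<le> (\<lambda>(x, y). \<pi> \<bullet> x + \<pi>0 * (q \<bullet> y)) z"
      using 1 xy by (simp add: abs_le_iff)
  qed
  then show ?thesis by (auto simp: bdd_below_def)
qed

lemma Qbar_scale:
  assumes "Kset JX JY A b T W h \<noteq> {}" "bounded (Kset JX JY A b T W h)" "c > 0"
  shows "Qbar JX JY A b T W h q (c *\<^sub>R \<pi>) (c * \<pi>0) = c * Qbar JX JY A b T W h q \<pi> \<pi>0"
proof -
  have e: "(\<lambda>(x, y). (c *\<^sub>R \<pi>) \<bullet> x + (c * \<pi>0) * (q \<bullet> y))
     = (\<lambda>z. c * (\<lambda>(x, y). \<pi> \<bullet> x + \<pi>0 * (q \<bullet> y)) z)"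
    by (auto simp: algebra_simps)
  show ?thesis unfolding Qbar_def e
    by (rule Inf_scale[OF assms(1) bdd_lin[OF assms(2)] assms(3)])
qed

lemma Qbar_add:
  assumes "Kset JX JY A b T W h \<noteq> {}" "bounded (Kset JX JY A b T W h)"
  shows "Qbar JX JY A b T W h q \<pi> a + Qbar JX JY A b T W h q \<pi>' a'
     \<le> Qbar JX JY A b T W h q (\<pi> + \<pi>') (a + a')"
proof -
  have e: "(\<lambda>(x, y). (\<pi> + \<pi>') \<bullet> x + (a + a') * (q \<bullet> y))
     = (\<lambda>z. (\<lambda>(x, y). \<pi> \<bullet> x + a * (q \<bullet> y)) z + (\<lambda>(x, y). \<pi>' \<bullet> x + a' * (q \<bullet> y)) z)"
    by (auto simp: algebra_simps)
  show ?thesis unfolding Qbar_def e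
    by (rule Inf_add_ge[OF assms(1) bdd_lin[OF assms(2)] bdd_lin[OF assms(2)]])
qed

lemma phi_le:
  fixes A :: "real^'nx^('m1::finite)" and T :: "real^'nx^('m2::finite)"
  assumes "(x', y') \<in> Kset JX JY A b T W h"
  shows "phi JX JY A b T W h lam \<le> ereal (lam \<bullet> x')"
proof -
  have "ereal (lam \<bullet> x') = ereal (sum (\<lambda>i. (0::real^'m2) $ i) UNIV + sum (\<lambda>i. (0::real^'m1) $ i) UNIV + lam \<bullet> x')"
    by simp
  also have "\<dots> \<in> {ereal (sum (\<lambda>i. v $ i) UNIV + sum (\<lambda>i. u $ i) UNIV + lam \<bullet> x) | x y u v.
            x \<in> mixed_int JX \<and> y \<in> mixed_int JY \<and> vge u 0 \<and> vge v 0
            \<and> vge (A *v x + u) b \<and> vge (T *v x + W *v y + v) h}"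
    using assms unfolding Kset_def
    by (intro CollectI exI[of _ x'] exI[of _ y'] exI[of _ "0::real^'m1"] exI[of _ "0::real^'m2"])
       (auto simp: vge_def)
  finally show ?thesis unfolding phi_def by (rule Inf_lower)
qed

theorem proposition1:
  fixes JX :: "('nx::finite) set" and JY :: "('ny::finite) set"
    and A :: "real^'nx^('m1::finite)" and b :: "real^'m1"
    and T :: "real^'nx^('m2::finite)" and W :: "real^'ny^'m2" and h :: "real^'m2" and q :: "real^'ny"
    and PP :: "((real^'nx) \<times> real) set"
  assumes rat: "\<forall>i j. A $ i $ j \<in> \<rat>" "\<forall>i. b $ i \<in> \<rat>"
      "\<forall>i j. T $ i $ j \<in> \<rat>" "\<forall>i j. W $ i $ j \<in> \<rat>"
      "\<forall>i. h $ i \<in> \<rat>" "\<forall>i. q $ i \<in> \<rat>"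
    and K_ne: "Kset JX JY A b T W h \<noteq> {}"
    and K_bdd: "bounded (Kset JX JY A b T W h)"
    and nbhd: "0 \<in> interior PP"
  shows "Pset JX JY A b T W h q (PP \<inter> {(\<pi>, \<pi>0). \<pi>0 \<ge> 0}) = Pbar JX JY A b T W h q"
proof -
  define Q where "Q = Qbar JX JY A b T W h q"
  have sc: "\<And>c p p0. c > 0 \<Longrightarrow> Q (c *\<^sub>R p) (c * p0) = c * Q p p0"
    unfolding Q_def using Qbar_scale[OF K_ne K_bdd] by blast
  have ad: "\<And>p a p' a'. Q p a + Q p' a' \<le> Q (p + p') (a + a')"
    unfolding Q_def using Qbar_add[OF K_ne K_bdd] by blast
  obtain e where e: "e > 0" "ball 0 e \<subseteq> PP" using nbhd by (auto simp: mem_interior)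
  show ?thesis
  proof (rule set_eqI)
    fix z :: "(real^'nx) \<times> real"
    obtain x \<theta> where z: "z = (x, \<theta>)" by (cases z)
    show "z \<in> Pset JX JY A b T W h q (PP \<inter> {(\<pi>, \<pi>0). \<pi>0 \<ge> 0}) \<longleftrightarrow> z \<in> Pbar JX JY A b T W h q"
    proof
      assume "z \<in> Pset JX JY A b T W h q (PP \<inter> {(\<pi>, \<pi>0). \<pi>0 \<ge> 0})"
      then have H: "\<And>p p0. (p, p0) \<in> PP \<Longrightarrow> p0 \<ge> 0 \<Longrightarrow> Q p p0 \<le> p \<bullet> x + p0 * \<theta>"
        unfolding Pset_def z Q_def by blast
      show "z \<in> Pbar JX JY A b T W h q"
        unfolding Pbar_def z
      proof (intro CollectI case_prodI allI conjI)
        fix lam :: "real^'nx"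
        define c where "c = e / (2 * (norm lam + 1))"
        have c0: "c > 0" using e unfolding c_def by (intro divide_pos_pos) (auto intro: add_nonneg_pos)
        have "c * (norm lam + 1) = e / 2"
          proof -
          have "norm lam + 1 > 0" by (simp add: add_nonneg_pos)
          then show ?thesis unfolding c_def by (simp add: field_simps)
        qed
        then have cn: "c * (norm lam + 1) < e" using e by simp
        have n1: "norm (c *\<^sub>R lam, c) < e"
          using norm_Pair_le[of "c *\<^sub>R lam" c] c0 cn by (simp add: algebra_simps)
        have n2: "norm (c *\<^sub>R lam, 0::real) < e"
          using norm_Pair_le[of "c *\<^sub>R lam" "0::real"] c0 cn by (simp add: algebra_simps)
        have "(c *\<^sub>R lam, c) \<in> PP" using n1 e(2) by (auto simp: dist_norm)
        then have "Q (c *\<^sub>R lam) (c * 1) \<le> (c *\<^sub>R lam) \<bullet> x + c * \<theta>" using H[of "c *\<^sub>R lam" c] c0 by simp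
        moreover have "c * Q lam 1 = Q (c *\<^sub>R lam) (c * 1)" by (rule sc[OF c0, symmetric])
        ultimately have "c * Q lam 1 \<le> c * (lam \<bullet> x + \<theta>)" by (simp add: algebra_simps)
        then show "Qbar JX JY A b T W h q lam 1 \<le> lam \<bullet> x + \<theta>" using c0 Q_def by simp
        have "(c *\<^sub>R lam, 0) \<in> PP" using n2 e(2) by (auto simp: dist_norm)
        then have "Q (c *\<^sub>R lam) (c * 0) \<le> (c *\<^sub>R lam) \<bullet> x" using H by fastforce
        moreover have "c * Q lam 0 = Q (c *\<^sub>R lam) (c * 0)" by (rule sc[OF c0, symmetric])
        ultimately have "c * Q lam 0 \<le> c * (lam \<bullet> x)" by (simp add: algebra_simps)
        then have Q0: "Q lam 0 \<le> lam \<bullet> x" using c0 by simp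
        define S where "S = (\<lambda>(x, y). lam \<bullet> x + 0 * (q \<bullet> y)) ` Kset JX JY A b T W h"
        have QS: "Q lam 0 = Inf S" unfolding Q_def Qbar_def S_def ..
        have "ereal (Inf S) = (INF a\<in>S. ereal a)"
          by (rule ereal_Inf') (use K_ne bdd_lin[OF K_bdd, of lam 0 q] in \<open>auto simp: S_def\<close>)
        moreover have "phi JX JY A b T W h lam \<le> (INF a\<in>S. ereal a)"
        proof (rule INF_greatest)
          fix a assume "a \<in> S"
          then obtain x' y' where "(x', y') \<in> Kset JX JY A b T W h" "a = lam \<bullet> x'"
            unfolding S_def by auto
          then show "phi JX JY A b T W h lam \<le> ereal a" using phi_le by blast
        qed
        ultimately have "phi JX JY A b T W h lam \<le> ereal (Q lam 0)" using QS by simp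
        also have "\<dots> \<le> ereal (lam \<bullet> x)" using Q0 by simp
        finally show "phi JX JY A b T W h lam \<le> ereal (lam \<bullet> x)" .
      qed
    next
      assume "z \<in> Pbar JX JY A b T W h q"
      then have P: "\<And>lam. Q lam 1 \<le> lam \<bullet> x + \<theta>"
        unfolding Pbar_def z Q_def by blast
      show "z \<in> Pset JX JY A b T W h q (PP \<inter> {(\<pi>, \<pi>0). \<pi>0 \<ge> 0})"
        unfolding Pset_def z
      proof (intro CollectI case_prodI ballI)
        fix pp :: "(real^'nx) \<times> real"
        assume pp: "pp \<in> PP \<inter> {(\<pi>, \<pi>0). \<pi>0 \<ge> 0}"
        obtain p p0 where ppe: "pp = (p, p0)" by (cases pp)
        have p0: "p0 \<ge> 0" using pp ppe by auto
        have "Q p p0 \<le> p \<bullet> x + p0 * \<theta>"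
        proof (cases "p0 > 0")
          case True
          define lam where "lam = (1 / p0) *\<^sub>R p"
          have pl: "p = p0 *\<^sub>R lam" using True by (simp add: lam_def)
          have "Q p p0 = Q (p0 *\<^sub>R lam) (p0 * 1)" using pl by simp
          also have "\<dots> = p0 * Q lam 1" by (rule sc[OF True])
          also have "\<dots> \<le> p0 * (lam \<bullet> x + \<theta>)" using P True by (simp add: mult_left_mono)
          also have "\<dots> = p \<bullet> x + p0 * \<theta>" using pl by (simp add: algebra_simps)
          finally show ?thesis .
        next
        case False
          then have z0: "p0 = 0" using p0 by simp
          show ?thesis
          proof (rule ccontr)
            assume "\<not> ?thesis"
            then have dpos: "Q p 0 - p \<bullet> x > 0" using z0 by simp
            define d where "d = Q p 0 - p \<bullet> x"
            define t where "t = max 1 ((\<theta> - Q 0 1) / d + 1)"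
            have t0: "t > 0" by (simp add: t_def)
            have "(\<theta> - Q 0 1) / d < t" by (simp add: t_def)
            then have lt: "\<theta> - Q 0 1 < t * d" using dpos d_def by (simp add: divide_less_eq)
            have "Q (t *\<^sub>R p) 0 + Q 0 1 \<le> Q (t *\<^sub>R p + 0) (0 + 1)" by (rule ad)
            also have "\<dots> \<le> (t *\<^sub>R p) \<bullet> x + \<theta>" using P[of "t *\<^sub>R p"] by simp
            finally have "Q (t *\<^sub>R p) (t * 0) + Q 0 1 \<le> t * (p \<bullet> x) + \<theta>" by simp
            moreover have "Q (t *\<^sub>R p) (t * 0) = t * Q p 0" by (rule sc[OF t0])
            ultimately have "t * Q p 0 + Q 0 1 \<le> t * (p \<bullet> x) + \<theta>" by simp
            then have "t * d \<le> \<theta> - Q 0 1" by (simp add: d_def algebra_simps)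
            then show False using lt by simp
          qed
        qed
        then show "case pp of (\<pi>, \<pi>0) \<Rightarrow> Qbar JX JY A b T W h q \<pi> \<pi>0 \<le> \<pi> \<bullet> x + \<pi>0 * \<theta>"
          using ppe Q_def by simp
      qed
    qed
  qed
qed

end
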